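(* Let $\Gamma$ be a free group on two generators $\xi,\eta$ and let $k\ge 2$. Let $\Psi^k$ be the set of reduced words of length exactly $k$. Call a pair $(\gamma,\psi)$ a group-theoretical relation of level $k$ if $\gamma\in\Gamma\setminus\{1\}$ has reduced length $|\gamma|\le k$, $\psi\in\Psi^k$, and the reduced length of the product satisfies $|\gamma\psi|\le k$. Then the number of group-theoretical relations of level $k$ equals $R_k=4\cdot r_k\cdot 3^{k-1}$, where $$r_k=1+\sum_{i=1}^{k-1}\Bigl(1+2\sum_{j=1}^{\min\{i,k-i\}}3^{j-1}\Bigr),$$ and equivalently $r_k=\sum_{j=0}^{k}a_j$ with $a_0=a_1=1$, $a_j=1+2\sum_{i=1}^{\lfloor j/2\rfloor}3^{i-1}$ for $2\le j\le k-1$, and $a_k=2\sum_{i=1}^{\lfloor k/2\rfloor}3^{i-1}$.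
   Context: $|w|$ denotes the length of the reduced word representing $w$ in the free basis $\{\xi,\eta\}$. (For example, for $k=2$ there are $48$ such relations.) *)

theory Defs
  imports Main
begin

text \<open>Free group on two generators xi, eta, modelled by reduced words.
  A letter is a generator together with an exponent sign (True = inverse).\<close>

datatype gen = Xi | Eta

type_synonym letter = "gen \<times> bool"

definition inv_letter :: "letter \<Rightarrow> letter" where
  "inv_letter x = (fst x, \<not> snd x)"

fun reduced :: "letter list \<Rightarrow> bool" where
  "reduced [] = True"
| "reduced [x] = True"
| "reduced (x # y # ys) = (y \<noteq> inv_letter x \<and> reduced (y # ys))"

definition red_cons :: "letter \<Rightarrow> letter list \<Rightarrow> letter list" where
  "red_cons x ws = (case ws of [] \<Rightarrow> [x]
                    | y # ys \<Rightarrow> (if y = inv_letter x then ys else x # ws))"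

definition reduce :: "letter list \<Rightarrow> letter list" where
  "reduce w = foldr red_cons w []"

definition fg_mult :: "letter list \<Rightarrow> letter list \<Rightarrow> letter list" where
  "fg_mult u v = reduce (u @ v)"

definition gt_relations :: "nat \<Rightarrow> (letter list \<times> letter list) set" where
  "gt_relations k = {(\<gamma>, \<psi>). reduced \<gamma> \<and> \<gamma> \<noteq> [] \<and> length \<gamma> \<le> k
      \<and> reduced \<psi> \<and> length \<psi> = k \<and> length (fg_mult \<gamma> \<psi>) \<le> k}"

definition r_seq :: "nat \<Rightarrow> nat" where
  "r_seq k = 1 + (\<Sum>i = 1..k-1. 1 + 2 * (\<Sum>j = 1..min i (k - i). 3 ^ (j - 1)))"

definition a_seq :: "nat \<Rightarrow> nat \<Rightarrow> nat" where
  "a_seq k j = (if j \<le> 1 then 1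
     else if j \<le> k - 1 then 1 + 2 * (\<Sum>i = 1..j div 2. 3 ^ (i - 1))
     else 2 * (\<Sum>i = 1..k div 2. 3 ^ (i - 1)))"

end

theory Submission
  imports Defs
begin


lemma inv_inv[simp]: "inv_letter (inv_letter x) = x"
  by (simp add: inv_letter_def)

lemma inv_eq_iff[simp]: "inv_letter x = inv_letter y \<longleftrightarrow> x = y"
  by (metis inv_inv)

lemma reduced_Cons: "reduced (x # xs) = (reduced xs \<and> (xs \<noteq> [] \<longrightarrow> hd xs \<noteq> inv_letter x))"
  by (cases xs) auto

lemma reduced_append: "reduced (xs @ ys) = (reduced xs \<and> reduced ys \<and> (xs \<noteq> [] \<longrightarrow> ys \<noteq> [] \<longrightarrow> hd ys \<noteq> inv_letter (last xs)))"
  by (induction xs) (auto simp: reduced_Cons)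

definition inv_word :: "letter list \<Rightarrow> letter list" where
  "inv_word w = rev (map inv_letter w)"

lemma inv_word_simps[simp]: "inv_word [] = []" "inv_word (x#xs) = inv_word xs @ [inv_letter x]"
  "inv_word (xs @ ys) = inv_word ys @ inv_word xs" "inv_word (inv_word xs) = xs"
  "length (inv_word xs) = length xs" "inv_word xs = [] \<longleftrightarrow> xs = []"
  by (auto simp: inv_word_def rev_map[symmetric] map_map o_def)

lemma last_inv_word: "xs \<noteq> [] \<Longrightarrow> last (inv_word xs) = inv_letter (hd xs)"
  by (cases xs) auto

lemma reduced_inv_word[simp]: "reduced (inv_word xs) = reduced xs"
  by (induction xs) (auto simp: reduced_append reduced_Cons last_inv_word)

lemma reduce_reduced: "reduced \<psi> \<Longrightarrow> foldr red_cons \<psi> [] = \<psi>"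
  by (induction \<psi>) (auto simp: red_cons_def reduced_Cons split: list.split)

lemma foldr_noncancel: "reduced (u @ v) \<Longrightarrow> foldr red_cons u v = u @ v"
  by (induction u) (auto simp: red_cons_def reduced_Cons split: list.split)

lemma foldr_cancel: "foldr red_cons (u @ inv_word p) (p @ v) = foldr red_cons u v"
  by (induction p) (auto simp: red_cons_def)

fun lcp :: "'a list \<Rightarrow> 'a list \<Rightarrow> nat" where
  "lcp (x#xs) (y#ys) = (if x = y then Suc (lcp xs ys) else 0)"
| "lcp _ _ = 0"

lemma lcp_le: "lcp xs ys \<le> length xs" "lcp xs ys \<le> length ys"
  by (induction xs ys rule: lcp.induct) auto

lemma lcp_take: "take (lcp xs ys) xs = take (lcp xs ys) ys"
  by (induction xs ys rule: lcp.induct) auto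

lemma lcp_max: "j \<le> length xs \<Longrightarrow> j \<le> length ys \<Longrightarrow> take j xs = take j ys \<Longrightarrow> j \<le> lcp xs ys"
proof (induction xs ys arbitrary: j rule: lcp.induct)
  case (1 x xs y ys)
  then show ?case by (cases j) auto
qed auto

lemma lcp_next: "lcp xs ys < length xs \<Longrightarrow> lcp xs ys < length ys \<Longrightarrow> xs ! lcp xs ys \<noteq> ys ! lcp xs ys"
  by (induction xs ys rule: lcp.induct) auto

lemma reduced_drop: "reduced xs \<Longrightarrow> reduced (drop c xs)"
  by (metis append_take_drop_id reduced_append)

lemma reduced_take: "reduced xs \<Longrightarrow> reduced (take c xs)"
  by (metis append_take_drop_id reduced_append)

lemma len_fg:
  assumes "reduced \<gamma>" "reduced \<psi>"
  shows "length (fg_mult \<gamma> \<psi>) = length \<gamma> + length \<psi> - 2 * lcp (inv_word \<gamma>) \<psi>"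
proof -
  define g where "g = inv_word \<gamma>"
  define c where "c = lcp g \<psi>"
  have rg: "reduced g" using assms by (simp add: g_def)
  have cle: "c \<le> length g" "c \<le> length \<psi>" using lcp_le c_def by auto
  have G: "\<gamma> = inv_word (drop c g) @ inv_word (take c g)"
    by (metis g_def inv_word_simps(3,4) append_take_drop_id)
  have P: "\<psi> = take c g @ drop c \<psi>"
    using lcp_take[of g \<psi>] c_def by simp
  have red: "reduced (inv_word (drop c g) @ drop c \<psi>)"
  proof -
    have "hd (drop c \<psi>) \<noteq> hd (drop c g)" if "drop c g \<noteq> []" "drop c \<psi> \<noteq> []"
      using that lcp_next[of g \<psi>] c_def by (simp add: hd_drop_conv_nth)
    then show ?thesis using rg assms(2)
      by (auto simp: reduced_append reduced_drop last_inv_word)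
  qed
  have "fg_mult \<gamma> \<psi> = foldr red_cons \<gamma> \<psi>"
    by (simp add: fg_mult_def reduce_def reduce_reduced assms)
  also have "\<dots> = foldr red_cons (inv_word (drop c g)) (drop c \<psi>)"
    by (subst G, subst P, rule foldr_cancel)
  also have "\<dots> = inv_word (drop c g) @ drop c \<psi>"
    by (rule foldr_noncancel[OF red])
  finally show ?thesis using cle by (simp add: c_def g_def)
qed

lemma fiber_cond:
  assumes "reduced \<gamma>" "reduced \<psi>" "length \<psi> = k" "length \<gamma> = n" "n \<le> k"
  shows "length (fg_mult \<gamma> \<psi>) \<le> k \<longleftrightarrow>
     take ((n+1) div 2) (inv_word \<gamma>) = take ((n+1) div 2) \<psi>"
proof -
  define c where "c = lcp (inv_word \<gamma>) \<psi>"
  have cle: "c \<le> n" "c \<le> k" using lcp_le[of "inv_word \<gamma>" \<psi>] assms c_def by auto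
  have "length (fg_mult \<gamma> \<psi>) \<le> k \<longleftrightarrow> (n+1) div 2 \<le> c"
    using len_fg[OF assms(1,2)] assms cle c_def by auto
  also have "\<dots> \<longleftrightarrow> take ((n+1) div 2) (inv_word \<gamma>) = take ((n+1) div 2) \<psi>"
  proof
    assume "(n+1) div 2 \<le> c"
    then show "take ((n+1) div 2) (inv_word \<gamma>) = take ((n+1) div 2) \<psi>"
      using lcp_take[of "inv_word \<gamma>" \<psi>] c_def
      by (metis min.absorb1 take_take)
  next
    assume "take ((n+1) div 2) (inv_word \<gamma>) = take ((n+1) div 2) \<psi>"
    then show "(n+1) div 2 \<le> c" unfolding c_def
      using assms by (intro lcp_max) auto
  qed
  finally show ?thesis .
qed



lemma letters_UNIV: "(UNIV::letter set) = {(Xi,False),(Xi,True),(Eta,False),(Eta,True)}"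
proof (rule set_eqI)
  fix x :: letter
  obtain g b where "x = (g,b)" by (cases x)
  then show "x \<in> UNIV \<longleftrightarrow> x \<in> {(Xi,False),(Xi,True),(Eta,False),(Eta,True)}"
    by (cases g; cases b) auto
qed

lemma fin_letters: "finite (UNIV::letter set)" by (simp add: letters_UNIV)
lemma card_letters: "card (UNIV::letter set) = 4" by (simp add: letters_UNIV)

lemma card_minus_one: "card (UNIV - {a::letter}) = 3"
  by (simp add: card_Diff_singleton fin_letters card_letters)

definition S :: "letter \<Rightarrow> nat \<Rightarrow> letter list set" where
  "S a l = {w. length w = l \<and> reduced (a # w)}"

lemma finite_lists_len: "finite {w::letter list. length w = l}"
  using finite_lists_length_eq[OF fin_letters, of l] by simp

lemma finite_S: "finite (S a l)"
  unfolding S_def by (rule finite_subset[OF _ finite_lists_len[of l]]) auto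

lemma S_Suc: "S a (Suc l) = (\<Union>b\<in>UNIV - {inv_letter a}. Cons b ` S b l)"
  unfolding S_def by (auto simp: length_Suc_conv)

lemma card_S: "card (S a l) = 3 ^ l"
proof (induction l arbitrary: a)
  case 0
  have "S a 0 = {[]}" by (auto simp: S_def)
  then show ?case by simp
next
  case (Suc l)
  have "card (S a (Suc l)) = (\<Sum>b\<in>UNIV - {inv_letter a}. card (Cons b ` S b l))"
    unfolding S_Suc
    by (rule card_UN_disjoint) (auto simp: fin_letters finite_S)
  also have "\<dots> = (\<Sum>b\<in>UNIV - {inv_letter a}. 3 ^ l)"
    by (rule sum.cong) (auto simp: card_image Suc)
  also have "\<dots> = 3 ^ Suc l" by (simp add: card_minus_one)
  finally show ?case .
qed

lemma card_Psi:
  assumes "k \<ge> 1"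
  shows "card {\<psi>. reduced \<psi> \<and> length \<psi> = k} = 4 * 3 ^ (k - 1)"
proof -
  have "{\<psi>. reduced \<psi> \<and> length \<psi> = k} = (\<Union>a\<in>UNIV. Cons a ` S a (k - 1))"
  proof -
    obtain k' where k: "k = Suc k'" using assms by (cases k) auto
    show ?thesis unfolding k by (auto simp: S_def length_Suc_conv)
  qed
  then have "card {\<psi>. reduced \<psi> \<and> length \<psi> = k} = (\<Sum>a\<in>UNIV. card (Cons a ` S a (k - 1)))"
    by (simp, intro card_UN_disjoint) (auto simp: fin_letters finite_S)
  also have "\<dots> = (\<Sum>a\<in>(UNIV::letter set). 3 ^ (k - 1))"
    by (rule sum.cong) (auto simp: card_image card_S)
  finally show ?thesis by (simp add: card_letters)
qed

lemma reduced_append_nonempty: "q \<noteq> [] \<Longrightarrow> reduced (q @ w) = (reduced q \<and> reduced (last q # w))"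
  by (auto simp: reduced_append reduced_Cons)

definition F :: "nat \<Rightarrow> letter list \<Rightarrow> letter list set" where
  "F n \<psi> = {\<gamma>. reduced \<gamma> \<and> length \<gamma> = n \<and> take ((n+1) div 2) (inv_word \<gamma>) = take ((n+1) div 2) \<psi>}"

lemma inj_inv_word: "inj inv_word"
  by (metis inj_def inv_word_simps(4))

lemma card_F:
  assumes "reduced \<psi>" "length \<psi> = k" "1 \<le> n" "n \<le> k"
  shows "card (F n \<psi>) = 3 ^ (n div 2)"
proof -
  define m where "m = (n+1) div 2"
  define q where "q = take m \<psi>"
  have m: "1 \<le> m" "m \<le> n" "n - m = n div 2" using assms(3) unfolding m_def by auto
  have lq: "length q = m" using m assms unfolding q_def by auto
  have qne: "q \<noteq> []" using lq m by auto
  have rq: "reduced q" using assms(1) by (simp add: q_def reduced_take)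
  have "{g. reduced g \<and> length g = n \<and> take m g = q} = (\<lambda>w. q @ w) ` S (last q) (n - m)"
  proof (rule set_eqI, rule iffI)
    fix g assume g: "g \<in> {g. reduced g \<and> length g = n \<and> take m g = q}"
    then have g1: "reduced g" "length g = n" "take m g = q" by auto
    have "g = q @ drop m g" using g1(3) append_take_drop_id[of m g] by simp
    moreover have "drop m g \<in> S (last q) (n - m)"
    proof -
      have "reduced (q @ drop m g)" using g1 append_take_drop_id[of m g] by simp
      then show ?thesis using g1 reduced_append_nonempty[OF qne, of "drop m g"]
        by (simp add: S_def)
    qed
    ultimately show "g \<in> (\<lambda>w. q @ w) ` S (last q) (n - m)" by blast
  next
    fix g assume "g \<in> (\<lambda>w. q @ w) ` S (last q) (n - m)"
    then obtain w where "g = q @ w" "w \<in> S (last q) (n - m)" by blast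
    then show "g \<in> {g. reduced g \<and> length g = n \<and> take m g = q}"
      using lq m rq reduced_append_nonempty[OF qne, of w] by (simp add: S_def)
  qed
  moreover have "F n \<psi> = inv_word ` {g. reduced g \<and> length g = n \<and> take m g = q}"
  proof (rule set_eqI)
    fix \<gamma>
    have "\<gamma> \<in> inv_word ` {g. reduced g \<and> length g = n \<and> take m g = q} \<longleftrightarrow>
          inv_word \<gamma> \<in> {g. reduced g \<and> length g = n \<and> take m g = q}"
    proof
      assume "\<gamma> \<in> inv_word ` {g. reduced g \<and> length g = n \<and> take m g = q}"
      then obtain x where "x \<in> {g. reduced g \<and> length g = n \<and> take m g = q}" "\<gamma> = inv_word x" by blast
      then show "inv_word \<gamma> \<in> {g. reduced g \<and> length g = n \<and> take m g = q}" by simp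
    next
      assume "inv_word \<gamma> \<in> {g. reduced g \<and> length g = n \<and> take m g = q}"
      then show "\<gamma> \<in> inv_word ` {g. reduced g \<and> length g = n \<and> take m g = q}"
        by (rule rev_image_eqI[of "inv_word \<gamma>"]) simp_all
    qed
    then show "\<gamma> \<in> F n \<psi> \<longleftrightarrow> \<gamma> \<in> inv_word ` {g. reduced g \<and> length g = n \<and> take m g = q}"
      unfolding F_def m_def[symmetric] q_def[symmetric] by simp
  qed
  ultimately have FF: "F n \<psi> = inv_word ` ((\<lambda>w. q @ w) ` S (last q) (n - m))" by simp
  have "card (F n \<psi>) = card ((\<lambda>w. q @ w) ` S (last q) (n - m))"
    unfolding FF by (rule card_image[OF inj_on_subset[OF inj_inv_word subset_UNIV]])
  also have "\<dots> = card (S (last q) (n - m))"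
    by (rule card_image) (simp add: inj_on_def)
  finally have "card (F n \<psi>) = card (S (last q) (n - m))" .
  then show ?thesis by (simp add: card_S m)
qed

lemma finite_F: "finite (F n \<psi>)"
  unfolding F_def by (rule finite_subset[OF _ finite_lists_len[of n]]) auto

lemma card_gt:
  assumes "k \<ge> 1"
  shows "card (gt_relations k) = 4 * 3 ^ (k - 1) * (\<Sum>n=1..k. 3 ^ (n div 2))"
proof -
  define P where "P = {\<psi>. reduced \<psi> \<and> length \<psi> = k}"
  define G where "G = (\<lambda>\<psi>. \<Union>n\<in>{1..k}. F n \<psi>)"
  have eq: "gt_relations k = (\<lambda>(\<psi>,\<gamma>). (\<gamma>,\<psi>)) ` Sigma P G"
  proof (rule set_eqI)
    fix x :: "letter list \<times> letter list"
    obtain \<gamma> \<psi> where x: "x = (\<gamma>, \<psi>)" by (cases x)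
    have "x \<in> gt_relations k \<longleftrightarrow> \<psi> \<in> P \<and> \<gamma> \<in> G \<psi>"
    proof
      assume "x \<in> gt_relations k"
      then have h: "reduced \<gamma>" "\<gamma> \<noteq> []" "length \<gamma> \<le> k" "reduced \<psi>" "length \<psi> = k"
          "length (fg_mult \<gamma> \<psi>) \<le> k" unfolding x gt_relations_def by auto
      have "\<gamma> \<in> F (length \<gamma>) \<psi>"
        using fiber_cond[of \<gamma> \<psi> k "length \<gamma>"] h unfolding F_def by simp
      moreover have "length \<gamma> \<in> {1..k}" using h by (cases \<gamma>) auto
      ultimately show "\<psi> \<in> P \<and> \<gamma> \<in> G \<psi>" using h unfolding P_def G_def by blast
    next
      assume "\<psi> \<in> P \<and> \<gamma> \<in> G \<psi>"
      then obtain n where h: "reduced \<psi>" "length \<psi> = k" "n \<in> {1..k}" "\<gamma> \<in> F n \<psi>"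
        unfolding P_def G_def by blast
      then have h2: "reduced \<gamma>" "length \<gamma> = n"
          "take ((n+1) div 2) (inv_word \<gamma>) = take ((n+1) div 2) \<psi>"
        unfolding F_def by auto
      have "length (fg_mult \<gamma> \<psi>) \<le> k"
        using fiber_cond[of \<gamma> \<psi> k n] h h2 by simp
      moreover have "\<gamma> \<noteq> []" using h2 h by auto
      ultimately show "x \<in> gt_relations k" using h h2 unfolding x gt_relations_def by simp
    qed
    then show "x \<in> gt_relations k \<longleftrightarrow> x \<in> (\<lambda>(\<psi>,\<gamma>). (\<gamma>,\<psi>)) ` Sigma P G"
      by (auto simp: x image_iff)
  qed
  have finP: "finite P" unfolding P_def by (rule finite_subset[OF _ finite_lists_len[of k]]) auto
  have cG: "card (G \<psi>) = (\<Sum>n=1..k. 3 ^ (n div 2))" if "\<psi> \<in> P" for \<psi>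
  proof -
    have "card (G \<psi>) = (\<Sum>n=1..k. card (F n \<psi>))"
      unfolding G_def by (rule card_UN_disjoint) (simp_all add: finite_F, auto simp: F_def)
    also have "\<dots> = (\<Sum>n=1..k. 3 ^ (n div 2))"
      by (rule sum.cong) (use that in \<open>auto simp: P_def card_F\<close>)
    finally show ?thesis .
  qed
  have finG: "finite (G \<psi>)" for \<psi> unfolding G_def by (auto simp: finite_F)
  have "card (gt_relations k) = card (Sigma P G)"
    unfolding eq by (rule card_image) (auto simp: inj_on_def)
  also have "\<dots> = (\<Sum>\<psi>\<in>P. card (G \<psi>))" by (simp add: card_SigmaI finP finG)
  also have "\<dots> = (\<Sum>\<psi>\<in>P. (\<Sum>n=1..k. 3 ^ (n div 2)))" by (rule sum.cong) (auto simp: cG)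
  also have "\<dots> = card P * (\<Sum>n=1..k. 3 ^ (n div 2))" by simp
  finally show ?thesis using card_Psi[OF assms] by (simp add: P_def)
qed



lemma geom: "1 + 2 * (\<Sum>j = 1..m. (3::nat) ^ (j - 1)) = 3 ^ m"
  by (induction m) (simp_all add: algebra_simps)

lemma min_sum:
  "(\<Sum>i = 1..k-1. (3::nat) ^ min i (k - i)) = (\<Sum>n = 2..k. 3 ^ (n div 2))"
proof (rule sum.reindex_bij_witness[where j = "\<lambda>i. if i \<le> k div 2 then 2*i else 2*(k-i)+1"
      and i = "\<lambda>n. if even n then n div 2 else k - n div 2"])
  fix a assume "a \<in> {1..k-1}"
  then show "(if even (if a \<le> k div 2 then 2*a else 2*(k-a)+1) then (if a \<le> k div 2 then 2*a else 2*(k-a)+1) div 2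
       else k - (if a \<le> k div 2 then 2*a else 2*(k-a)+1) div 2) = a" by (auto; presburger)
next
  fix a assume "a \<in> {1..k-1}"
  then show "(if a \<le> k div 2 then 2*a else 2*(k-a)+1) \<in> {2..k}" by (auto; presburger)
next
  fix b assume "b \<in> {2..k}"
  then show "(if (if even b then b div 2 else k - b div 2) \<le> k div 2 then 2*(if even b then b div 2 else k - b div 2)
      else 2*(k-(if even b then b div 2 else k - b div 2))+1) = b" by (auto; presburger)
next
  fix b assume "b \<in> {2..k}"
  then show "(if even b then b div 2 else k - b div 2) \<in> {1..k-1}" by (auto; presburger)
next
  fix a assume "a \<in> {1..k-1}"
  then have "(if a \<le> k div 2 then 2*a else 2*(k-a)+1) div 2 = min a (k - a)" by (auto; presburger)
  then show "3 ^ ((if a \<le> k div 2 then 2*a else 2*(k-a)+1) div 2) = (3::nat) ^ min a (k - a)" by simp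
qed

lemma r_seq_T: "k \<ge> 2 \<Longrightarrow> r_seq k = (\<Sum>n = 1..k. 3 ^ (n div 2))"
proof -
  assume k: "k \<ge> 2"
  have "r_seq k = 1 + (\<Sum>i = 1..k-1. (3::nat) ^ min i (k - i))"
    unfolding r_seq_def using geom by simp
  also have "\<dots> = 1 + (\<Sum>n = 2..k. 3 ^ (n div 2))" using min_sum[of k] by simp
  also have "\<dots> = (\<Sum>n = 1..k. 3 ^ (n div 2))"
    using k by (subst sum.atLeast_Suc_atMost[of 1 k]) (simp_all add: numeral_2_eq_2)
  finally show ?thesis .
qed

lemma a_seq_T: "k \<ge> 2 \<Longrightarrow> (\<Sum>j = 0..k. a_seq k j) = (\<Sum>n = 1..k. 3 ^ (n div 2))"
proof -
  assume k: "k \<ge> 2"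
  have lt: "a_seq k j = 3 ^ (j div 2)" if "j < k" for j
    using that geom[of "j div 2"] by (auto simp: a_seq_def)
  have kk: "a_seq k k + 1 = 3 ^ (k div 2)"
    using k geom[of "k div 2"] by (auto simp: a_seq_def)
  obtain k' where k': "k = Suc k'" using k by (cases k) auto
  have "(\<Sum>j = 0..k. a_seq k j) + 1 = (\<Sum>j = 0..k'. a_seq k j) + (a_seq k k + 1)"
    by (simp add: k')
  also have "\<dots> = (\<Sum>j = 0..k'. 3 ^ (j div 2)) + 3 ^ (k div 2)"
    using lt kk k' by simp
  also have "\<dots> = (\<Sum>j = 0..k. 3 ^ (j div 2))" by (simp add: k')
  also have "\<dots> = 1 + (\<Sum>j = 1..k. 3 ^ (j div 2))"
    by (simp add: sum.atLeast_Suc_atMost)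
  finally show ?thesis by simp
qed


theorem lemma2p2:
  fixes k :: nat
  assumes "k \<ge> 2"
  shows "card (gt_relations k) = 4 * r_seq k * 3 ^ (k - 1)
       \<and> r_seq k = (\<Sum>j = 0..k. a_seq k j)"
  using card_gt[of k] r_seq_T[OF assms] a_seq_T[OF assms] assms by simp

end
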